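(* Let $n\geq 2$ and $m\geq 2$ be integers with $mn$ even. Then the total resonance graphs $R_t(C(m-1,n))$ and $R_t(T(m,n))$ are bipartite. Consequently the flip graphs $\mathcal{T}(C(m,n))$ and $\mathcal{T}(T(m,n))$ of the quadriculated cylinder and torus are bipartite.
   Context: The $(m,n)$-quadriculated cylinder $C(m,n)$ is obtained from an $m\times n$ chessboard ($m$ rows each of $n$ unit squares) by identifying its left and right sides; the $(m,n)$-quadriculated torus $T(m,n)$ is obtained by further identifying top and bottom sides. As graphs, $C(k,n)$ denotes the graph formed by the grid points and unit segments of the quadriculated cylinder with $k$ rows of squares: it consists of $k+1$ cycles of length $n$ (a cycle of length $2$ being a pair of parallel edges), consecutive ones joined by a perfect matching of "vertical" edges; it is viewed as embedded in the sphere by capping both ends, so its faces are the $kn$ unit squares and two faces bounded by the two end cycles. $T(m,n)$ as a graph is the grid graph of the quadriculated torus (vertices the $mn$ grid points, edges the unit segments), cellularly embedded in the torus with faces the $mn$ unit squares. The inner dual of the region $C(m,n)$ is the graph $C(m-1,n)$ and the inner dual of $T(m,n)$ is $T(m,n)$. A domino is a union of two adjacent unit squares and a tiling is a set of dominoes with disjoint interiors covering the region; a flip removes two side-by-side parallel dominoes forming a $2\times 2$ block and replaces them by the other two dominoes covering the block. The flip graph $\mathcal{T}(R)$ has the tilings of $R$ as vertices, two being adjacent iff one is obtained from the other by a flip. For a graph $G$ embedded on a surface, the total resonance graph $R_t(G)$ has the perfect matchings of $G$ as vertices, two perfect matchings $M_1,M_2$ being adjacent iff $M_1\oplus M_2$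 is exactly the edge set of the boundary cycle of one face. *)

theory Defs
  imports Main
begin

text \<open>Edges carry an identity (so that parallel edges, e.g. cycles of length 2, are
distinct).  H i j is the horizontal edge leaving grid point (i,j) to the right,
V i j the vertical edge leaving grid point (i,j) upwards.\<close>

datatype gedge = H nat nat | V nat nat

definition perfect_matching ::
  "('v set) \<Rightarrow> ('e set) \<Rightarrow> ('e \<Rightarrow> 'v set) \<Rightarrow> 'e set \<Rightarrow> bool" where
  "perfect_matching Vs E ends M \<longleftrightarrow> M \<subseteq> E \<and> (\<forall>v\<in>Vs. \<exists>!e. e \<in> M \<and> v \<in> ends e)"

definition symdiff :: "'a set \<Rightarrow> 'a set \<Rightarrow> 'a set" where
  "symdiff A B = (A - B) \<union> (B - A)"

text \<open>Adjacency of the total resonance graph; Fs is the set of faces, each given by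
the edge set of its boundary cycle.\<close>
definition total_res_adj ::
  "('v set) \<Rightarrow> ('e set) \<Rightarrow> ('e \<Rightarrow> 'v set) \<Rightarrow> 'e set set \<Rightarrow> 'e set \<Rightarrow> 'e set \<Rightarrow> bool" where
  "total_res_adj Vs E ends Fs M1 M2 \<longleftrightarrow>
     perfect_matching Vs E ends M1 \<and> perfect_matching Vs E ends M2 \<and>
     (\<exists>f\<in>Fs. symdiff M1 M2 = f)"

definition bipartite :: "('a \<Rightarrow> 'a \<Rightarrow> bool) \<Rightarrow> bool" where
  "bipartite R \<longleftrightarrow> (\<exists>c :: 'a \<Rightarrow> bool. \<forall>x y. R x y \<longrightarrow> c x \<noteq> c y)"

text \<open>Domino tilings of a region: Sq is the set of unit squares, Adj the
(side-)adjacency of squares; a domino is the union of two adjacent squares.\<close>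
definition dominoes :: "'s set \<Rightarrow> ('s \<Rightarrow> 's \<Rightarrow> bool) \<Rightarrow> 's set set" where
  "dominoes Sq Adj = {{a, b} | a b. a \<in> Sq \<and> b \<in> Sq \<and> Adj a b}"

definition tiling :: "'s set \<Rightarrow> ('s \<Rightarrow> 's \<Rightarrow> bool) \<Rightarrow> 's set set \<Rightarrow> bool" where
  "tiling Sq Adj T \<longleftrightarrow> T \<subseteq> dominoes Sq Adj \<and> (\<forall>s\<in>Sq. \<exists>!d. d \<in> T \<and> s \<in> d)"

text \<open>Flips: Blocks contains pairs (P,Q) where P and Q are the two ways of covering
a 2x2 block by two parallel dominoes (both orders included).\<close>
definition flip_adj ::
  "'s set \<Rightarrow> ('s \<Rightarrow> 's \<Rightarrow> bool) \<Rightarrow> ('s set set \<times> 's set set) set \<Rightarrow> 's set set \<Rightarrow> 's set set \<Rightarrow> bool" where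
  "flip_adj Sq Adj Blocks T1 T2 \<longleftrightarrow>
     tiling Sq Adj T1 \<and> tiling Sq Adj T2 \<and>
     (\<exists>(P, Q)\<in>Blocks. P \<subseteq> T1 \<and> T2 = (T1 - P) \<union> Q)"

text \<open>Grid points (i,j), 0 \<le> i \<le> k, j \<in> Z_n; k+1 cycles of length n.\<close>
definition cyl_verts :: "nat \<Rightarrow> nat \<Rightarrow> (nat \<times> nat) set" where
  "cyl_verts k n = {(i, j). i \<le> k \<and> j < n}"

definition cyl_edges :: "nat \<Rightarrow> nat \<Rightarrow> gedge set" where
  "cyl_edges k n = {H i j | i j. i \<le> k \<and> j < n} \<union> {V i j | i j. i < k \<and> j < n}"

fun cyl_ends :: "nat \<Rightarrow> gedge \<Rightarrow> (nat \<times> nat) set" where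
  "cyl_ends n (H i j) = {(i, j), (i, (j + 1) mod n)}"
| "cyl_ends n (V i j) = {(i, j), (i + 1, j)}"

text \<open>Faces: the k n unit squares and the two end faces bounded by the end cycles.\<close>
definition cyl_faces :: "nat \<Rightarrow> nat \<Rightarrow> gedge set set" where
  "cyl_faces k n =
     {{H i j, H (i + 1) j, V i j, V i ((j + 1) mod n)} | i j. i < k \<and> j < n}
     \<union> {{H 0 j | j. j < n}, {H k j | j. j < n}}"

definition tor_verts :: "nat \<Rightarrow> nat \<Rightarrow> (nat \<times> nat) set" where
  "tor_verts m n = {(i, j). i < m \<and> j < n}"

definition tor_edges :: "nat \<Rightarrow> nat \<Rightarrow> gedge set" where
  "tor_edges m n = {H i j | i j. i < m \<and> j < n} \<union> {V i j | i j. i < m \<and> j < n}"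

fun tor_ends :: "nat \<Rightarrow> nat \<Rightarrow> gedge \<Rightarrow> (nat \<times> nat) set" where
  "tor_ends m n (H i j) = {(i, j), (i, (j + 1) mod n)}"
| "tor_ends m n (V i j) = {(i, j), ((i + 1) mod m, j)}"

definition tor_faces :: "nat \<Rightarrow> nat \<Rightarrow> gedge set set" where
  "tor_faces m n =
     {{H i j, H ((i + 1) mod m) j, V i j, V i ((j + 1) mod n)} | i j. i < m \<and> j < n}"

section \<open>Regions: quadriculated cylinder and torus (squares indexed by (row, column))\<close>

definition cylR_squares :: "nat \<Rightarrow> nat \<Rightarrow> (nat \<times> nat) set" where
  "cylR_squares m n = {(i, j). i < m \<and> j < n}"

definition cylR_adj :: "nat \<Rightarrow> nat \<Rightarrow> nat \<times> nat \<Rightarrow> nat \<times> nat \<Rightarrow> bool" where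
  "cylR_adj m n a b \<longleftrightarrow>
     (fst a = fst b \<and> (snd b = (snd a + 1) mod n \<or> snd a = (snd b + 1) mod n)) \<or>
     (snd a = snd b \<and> (fst b = fst a + 1 \<or> fst a = fst b + 1))"

definition cylR_blocks :: "nat \<Rightarrow> nat \<Rightarrow> ((nat \<times> nat) set set \<times> (nat \<times> nat) set set) set" where
  "cylR_blocks m n =
     (\<Union>i\<in>{i. i + 1 < m}. \<Union>j\<in>{j. j < n}.
        let j' = (j + 1) mod n;
            P = {{(i, j), (i, j')}, {(i + 1, j), (i + 1, j')}};
            Q = {{(i, j), (i + 1, j)}, {(i, j'), (i + 1, j')}}
        in {(P, Q), (Q, P)})"

definition torR_squares :: "nat \<Rightarrow> nat \<Rightarrow> (nat \<times> nat) set" where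
  "torR_squares m n = {(i, j). i < m \<and> j < n}"

definition torR_adj :: "nat \<Rightarrow> nat \<Rightarrow> nat \<times> nat \<Rightarrow> nat \<times> nat \<Rightarrow> bool" where
  "torR_adj m n a b \<longleftrightarrow>
     (fst a = fst b \<and> (snd b = (snd a + 1) mod n \<or> snd a = (snd b + 1) mod n)) \<or>
     (snd a = snd b \<and> (fst b = (fst a + 1) mod m \<or> fst a = (fst b + 1) mod m))"

definition torR_blocks :: "nat \<Rightarrow> nat \<Rightarrow> ((nat \<times> nat) set set \<times> (nat \<times> nat) set set) set" where
  "torR_blocks m n =
     (\<Union>i\<in>{i. i < m}. \<Union>j\<in>{j. j < n}.
        let i' = (i + 1) mod m; j' = (j + 1) mod n;
            P = {{(i, j), (i, j')}, {(i', j), (i', j')}};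
            Q = {{(i, j), (i', j)}, {(i, j'), (i', j')}}
        in {(P, Q), (Q, P)})"

end

theory Submission
  imports Defs
begin


lemma match_color_aux:
  fixes X Y Z W :: nat
  assumes "X + Y = Z + 2 * W" "odd Z"
  shows "even X \<noteq> even Y"
proof -
  have "even (X + Y) = even Z" using assms(1) by simp
  then show ?thesis using assms(2) by auto
qed

lemma flip_color:
  assumes "finite T1" "finite Q" "P \<subseteq> T1" "Q \<inter> T1 = {}" "T2 = (T1 - P) \<union> Q"
    "odd (card (P \<inter> S) + card (Q \<inter> S))"
  shows "even (card (T1 \<inter> S)) \<noteq> even (card (T2 \<inter> S))"
proof -
  have fP: "finite P" using assms finite_subset by blast
  have e: "T2 \<inter> S = ((T1 \<inter> S) - (P \<inter> S)) \<union> (Q \<inter> S)" using assms by blast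
  have "card (((T1 \<inter> S) - (P \<inter> S)) \<union> (Q \<inter> S)) = card ((T1 \<inter> S) - (P \<inter> S)) + card (Q \<inter> S)"
    by (rule card_Un_disjoint) (use assms in auto)
  moreover have "card ((T1 \<inter> S) - (P \<inter> S)) + card (P \<inter> S) = card (T1 \<inter> S)"
  proof -
    have "P \<inter> S \<subseteq> T1 \<inter> S" using assms(3) by blast
    moreover have "finite (P \<inter> S)" using fP by simp
    ultimately show ?thesis using assms(1) by (simp add: card_Diff_subset card_mono)
  qed
  ultimately have h: "card (T2 \<inter> S) + card (P \<inter> S) = card (T1 \<inter> S) + card (Q \<inter> S)" using e by simp
  have "even (card (T2 \<inter> S) + card (P \<inter> S)) = even (card (T1 \<inter> S) + card (Q \<inter> S))" using h by simp
  then show ?thesis using assms(6) by auto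
qed

lemma pm_pair:
  assumes "perfect_matching Vs E ends M1" "perfect_matching Vs E ends M2"
    "e1 \<in> symdiff M1 M2" "e2 \<in> symdiff M1 M2" "e1 \<noteq> e2"
    "v \<in> Vs" "v \<in> ends e1" "v \<in> ends e2"
  shows "e2 \<in> M1 \<longleftrightarrow> e1 \<notin> M1"
proof -
  have u1: "\<And>a b. a \<in> M1 \<Longrightarrow> b \<in> M1 \<Longrightarrow> v \<in> ends a \<Longrightarrow> v \<in> ends b \<Longrightarrow> a = b"
    using assms(1,6) unfolding perfect_matching_def by metis
  have u2: "\<And>a b. a \<in> M2 \<Longrightarrow> b \<in> M2 \<Longrightarrow> v \<in> ends a \<Longrightarrow> v \<in> ends b \<Longrightarrow> a = b"
    using assms(2,6) unfolding perfect_matching_def by metis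
  have s1: "e1 \<in> M1 \<longleftrightarrow> e1 \<notin> M2" using assms(3) unfolding symdiff_def by blast
  have s2: "e2 \<in> M1 \<longleftrightarrow> e2 \<notin> M2" using assms(4) unfolding symdiff_def by blast
  show ?thesis using u1[of e1 e2] u2[of e1 e2] s1 s2 assms(5,7,8) by blast
qed



lemma cyl_end_impossible:
  assumes n2: "n \<ge> 2" and no: "odd n" and r: "r \<le> k"
    and p1: "perfect_matching (cyl_verts k n) (cyl_edges k n) (cyl_ends n) M1"
    and p2: "perfect_matching (cyl_verts k n) (cyl_edges k n) (cyl_ends n) M2"
    and sd: "symdiff M1 M2 = {H r j | j. j < n}"
  shows False
proof -
  have step: "H r (Suc j) \<in> M1 \<longleftrightarrow> H r j \<notin> M1" if "Suc j < n" for j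
  proof (rule pm_pair[OF p1 p2])
    show "H r j \<in> symdiff M1 M2" using sd that by auto
    show "H r (Suc j) \<in> symdiff M1 M2" using sd that by auto
    show "H r j \<noteq> H r (Suc j)" by simp
    show "(r, Suc j) \<in> cyl_verts k n" using r that by (simp add: cyl_verts_def)
    show "(r, Suc j) \<in> cyl_ends n (H r j)" using that by simp
    show "(r, Suc j) \<in> cyl_ends n (H r (Suc j))" by simp
  qed
  have alt: "j < n \<longrightarrow> (H r j \<in> M1 \<longleftrightarrow> (H r 0 \<in> M1 \<longleftrightarrow> even j))" for j
  proof (induction j)
    case 0 then show ?case by simp
  next
    case (Suc j) then show ?case using step[of j] by auto
  qed
  have wrap: "H r 0 \<in> M1 \<longleftrightarrow> H r (n - 1) \<notin> M1"
  proof (rule pm_pair[OF p1 p2])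
    show "H r (n - 1) \<in> symdiff M1 M2" using sd n2 by auto
    show "H r 0 \<in> symdiff M1 M2" using sd n2 by auto
    show "H r (n - 1) \<noteq> H r 0" using n2 by simp
    show "(r, 0) \<in> cyl_verts k n" using r n2 by (simp add: cyl_verts_def)
    show "(r, 0) \<in> cyl_ends n (H r (n - 1))" using n2 by simp
    show "(r, 0) \<in> cyl_ends n (H r 0)" by simp
  qed
  have "even (n - 1)" using no n2 by simp
  then show False using alt[of "n - 1"] wrap n2 by auto
qed

lemma finite_cyl_edges: "finite (cyl_edges k n)"
proof -
  have "cyl_edges k n = (\<lambda>(i, j). H i j) ` ({..k} \<times> {..<n}) \<union> (\<lambda>(i, j). V i j) ` ({..<k} \<times> {..<n})"
    unfolding cyl_edges_def by auto
  then show ?thesis by simp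
qed

lemma finite_tor_edges: "finite (tor_edges m n)"
proof -
  have "tor_edges m n = (\<lambda>(i, j). H i j) ` ({..<m} \<times> {..<n}) \<union> (\<lambda>(i, j). V i j) ` ({..<m} \<times> {..<n})"
    unfolding tor_edges_def by auto
  then show ?thesis by simp
qed

lemma even_mod_even: "even (m::nat) \<Longrightarrow> even (a mod m) = even a"
  by (metis dvd_mod_iff even_mod_2_iff mod_mod_cancel)



definition Scyl_even :: "gedge set" where
  "Scyl_even = {e. case e of H i j \<Rightarrow> j = 0 | V i j \<Rightarrow> even j}"

definition Srow :: "gedge set" where
  "Srow = {e. case e of H i j \<Rightarrow> even i | V i j \<Rightarrow> False}"

definition Scol :: "gedge set" where
  "Scol = {e. case e of H i j \<Rightarrow> False | V i j \<Rightarrow> even j}"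

lemma sq_cyl_even:
  assumes "even n" "n \<ge> 2" "j < n"
  shows "odd (card ({H i j, H (i + 1) j, V i j, V i ((j + 1) mod n)} \<inter> Scyl_even))"
proof (cases "j = 0")
  case True
  then have "{H i j, H (i + 1) j, V i j, V i ((j + 1) mod n)} \<inter> Scyl_even = {H i 0, H (i + 1) 0, V i 0}"
    using assms by (auto simp: Scyl_even_def)
  then show ?thesis by simp
next
  case False
  show ?thesis
  proof (cases "even j")
    case True
    then have "j + 1 < n" using assms by (metis add_leD1 Suc_eq_plus1 even_Suc le_neq_implies_less Suc_leI)
    then have "{H i j, H (i + 1) j, V i j, V i ((j + 1) mod n)} \<inter> Scyl_even = {V i j}"
      using True False by (auto simp: Scyl_even_def)
    then show ?thesis by simp
  next
    case o: False
    have "even ((j + 1) mod n)" using o assms even_mod_even[of n "j+1"] by simp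
    then have "{H i j, H (i + 1) j, V i j, V i ((j + 1) mod n)} \<inter> Scyl_even = {V i ((j + 1) mod n)}"
      using o False by (auto simp: Scyl_even_def)
    then show ?thesis by simp
  qed
qed

lemma sq_row:
  assumes "i' = i + 1 \<or> (even m \<and> i' = (i + 1) mod m)"
  shows "odd (card ({H i j, H i' j, V i j, V i j'} \<inter> Srow))"
proof -
  have "even i' \<longleftrightarrow> odd i" using assms even_mod_even[of m "i+1"] by auto
  then show ?thesis
  proof (cases "even i")
    case True
    then have "{H i j, H i' j, V i j, V i j'} \<inter> Srow = {H i j}" using \<open>even i' \<longleftrightarrow> odd i\<close>
      by (auto simp: Srow_def)
    then show ?thesis by simp
  next
    case False
    then have "{H i j, H i' j, V i j, V i j'} \<inter> Srow = {H i' j}" using \<open>even i' \<longleftrightarrow> odd i\<close>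
      by (auto simp: Srow_def)
    then show ?thesis by simp
  qed
qed

lemma sq_col:
  assumes "even n"
  shows "odd (card ({H i j, H i' j, V i j, V i ((j + 1) mod n)} \<inter> Scol))"
proof -
  have e: "even ((j + 1) mod n) \<longleftrightarrow> odd j" using assms even_mod_even[of n "j+1"] by auto
  show ?thesis
  proof (cases "even j")
    case True
    then have "{H i j, H i' j, V i j, V i ((j + 1) mod n)} \<inter> Scol = {V i j}" using e
      by (auto simp: Scol_def)
    then show ?thesis by simp
  next
    case False
    then have "{H i j, H i' j, V i j, V i ((j + 1) mod n)} \<inter> Scol = {V i ((j + 1) mod n)}" using e
      by (auto simp: Scol_def)
    then show ?thesis by simp
  qed
qed

lemma end_cyl_even:
  assumes "n \<ge> 2"
  shows "odd (card ({H r j | j. j < n} \<inter> Scyl_even))"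
proof -
  have "{H r j | j. j < n} \<inter> Scyl_even = {H r 0}" using assms by (auto simp: Scyl_even_def)
  then show ?thesis by simp
qed



lemma bip_intro:
  fixes c :: "'a \<Rightarrow> bool"
  assumes "\<And>x y. R x y \<Longrightarrow> c x \<noteq> c y"
  shows "bipartite R"
  unfolding bipartite_def by (rule exI[of _ c], intro allI impI, rule assms)

lemma card_symdiff:
  assumes "finite A" "finite B"
  shows "card (A \<inter> S) + card (B \<inter> S) = card (symdiff A B \<inter> S) + 2 * card (A \<inter> B \<inter> S)"
proof -
  have a: "A \<inter> S = ((A - B) \<inter> S) \<union> (A \<inter> B \<inter> S)" by blast
  have b: "B \<inter> S = ((B - A) \<inter> S) \<union> (A \<inter> B \<inter> S)" by blast
  have s: "symdiff A B \<inter> S = ((A - B) \<inter> S) \<union> ((B - A) \<inter> S)" unfolding symdiff_def by blast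
  have "card (((A - B) \<inter> S) \<union> (A \<inter> B \<inter> S)) = card ((A - B) \<inter> S) + card (A \<inter> B \<inter> S)"
    by (rule card_Un_disjoint) (use assms in auto)
  moreover have "card (((B - A) \<inter> S) \<union> (A \<inter> B \<inter> S)) = card ((B - A) \<inter> S) + card (A \<inter> B \<inter> S)"
    by (rule card_Un_disjoint) (use assms in auto)
  moreover have "card (((A - B) \<inter> S) \<union> ((B - A) \<inter> S)) = card ((A - B) \<inter> S) + card ((B - A) \<inter> S)"
    by (rule card_Un_disjoint) (use assms in auto)
  ultimately show ?thesis using a b s by simp
qed

lemma match_color:
  assumes "finite A" "finite B" "odd (card (symdiff A B \<inter> S))"
  shows "even (card (A \<inter> S)) \<noteq> even (card (B \<inter> S))"
  using match_color_aux[OF card_symdiff[OF assms(1,2), of S] assms(3)] .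

lemma pm_finite: "perfect_matching Vs E ends M \<Longrightarrow> finite E \<Longrightarrow> finite M"
  unfolding perfect_matching_def using finite_subset by blast

lemma bip_res:
  assumes fin: "finite E"
    and odd: "\<And>M1 M2. perfect_matching Vs E ends M1 \<Longrightarrow> perfect_matching Vs E ends M2 \<Longrightarrow>
              symdiff M1 M2 \<in> Fs \<Longrightarrow> odd (card (symdiff M1 M2 \<inter> S))"
  shows "bipartite (total_res_adj Vs E ends Fs)"
proof (rule bip_intro[where c = "\<lambda>M. even (card (M \<inter> S))"])
  fix M1 M2 assume "total_res_adj Vs E ends Fs M1 M2"
  then have p1: "perfect_matching Vs E ends M1" and p2: "perfect_matching Vs E ends M2"
    and f: "symdiff M1 M2 \<in> Fs" unfolding total_res_adj_def by auto
  show "even (card (M1 \<inter> S)) \<noteq> even (card (M2 \<inter> S))"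
    using match_color[OF pm_finite[OF p1 fin] pm_finite[OF p2 fin] odd[OF p1 p2 f]] .
qed

lemma cyl_bip:
  assumes n2: "n \<ge> 2"
  shows "bipartite (total_res_adj (cyl_verts k n) (cyl_edges k n) (cyl_ends n) (cyl_faces k n))"
proof (cases "even n")
  case True
  show ?thesis
  proof (rule bip_res[OF finite_cyl_edges, where S = Scyl_even])
    fix M1 M2 assume "symdiff M1 M2 \<in> cyl_faces k n"
    then obtain f where fd: "f = symdiff M1 M2" and "f \<in> cyl_faces k n" by blast
    then consider (sq) i j where "j < n" "f = {H i j, H (i + 1) j, V i j, V i ((j + 1) mod n)}"
      | (e0) "f = {H 0 j | j. j < n}" | (ek) "f = {H k j | j. j < n}"
      unfolding cyl_faces_def Un_iff insert_iff empty_iff mem_Collect_eq by metis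
    then have "odd (card (f \<inter> Scyl_even))"
    proof cases
      case sq show ?thesis unfolding sq(2) by (rule sq_cyl_even[OF True n2 sq(1)])
    next
      case e0 show ?thesis unfolding e0 by (rule end_cyl_even[OF n2])
    next
      case ek show ?thesis unfolding ek by (rule end_cyl_even[OF n2])
    qed
    then show "odd (card (symdiff M1 M2 \<inter> Scyl_even))" using fd by simp
  qed
next
  case False
  show ?thesis
  proof (rule bip_res[OF finite_cyl_edges, where S = Srow])
    fix M1 M2 assume p1: "perfect_matching (cyl_verts k n) (cyl_edges k n) (cyl_ends n) M1"
      and p2: "perfect_matching (cyl_verts k n) (cyl_edges k n) (cyl_ends n) M2"
      and "symdiff M1 M2 \<in> cyl_faces k n"
    then obtain f where fd: "f = symdiff M1 M2" and "f \<in> cyl_faces k n" by blast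
    then consider (sq) i j where "j < n" "f = {H i j, H (i + 1) j, V i j, V i ((j + 1) mod n)}"
      | (e0) "f = {H 0 j | j. j < n}" | (ek) "f = {H k j | j. j < n}"
      unfolding cyl_faces_def Un_iff insert_iff empty_iff mem_Collect_eq by metis
    then have "odd (card (f \<inter> Srow))"
    proof cases
      case sq show ?thesis unfolding sq(2) by (rule sq_row) simp
    next
      case e0 then show ?thesis using cyl_end_impossible[OF n2 False _ p1 p2, of 0] fd by blast
    next
      case ek then show ?thesis using cyl_end_impossible[OF n2 False _ p1 p2, of k] fd by blast
    qed
    then show "odd (card (symdiff M1 M2 \<inter> Srow))" using fd by simp
  qed
qed

lemma tor_bip:
  assumes n2: "n \<ge> 2" and m2: "m \<ge> 2" and ev: "even (m * n)"
  shows "bipartite (total_res_adj (tor_verts m n) (tor_edges m n) (tor_ends m n) (tor_faces m n))"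
proof (cases "even m")
  case True
  show ?thesis
  proof (rule bip_res[OF finite_tor_edges, where S = Srow])
    fix M1 M2 assume "symdiff M1 M2 \<in> tor_faces m n"
    then obtain i j where "symdiff M1 M2 = {H i j, H ((i + 1) mod m) j, V i j, V i ((j + 1) mod n)}"
      unfolding tor_faces_def mem_Collect_eq by metis
    then show "odd (card (symdiff M1 M2 \<inter> Srow))" using sq_row[of "(i + 1) mod m" i m j "(j + 1) mod n"] True by simp
  qed
next
  case False
  then have en: "even n" using ev by simp
  show ?thesis
  proof (rule bip_res[OF finite_tor_edges, where S = Scol])
    fix M1 M2 assume "symdiff M1 M2 \<in> tor_faces m n"
    then obtain i j where "symdiff M1 M2 = {H i j, H ((i + 1) mod m) j, V i j, V i ((j + 1) mod n)}"
      unfolding tor_faces_def mem_Collect_eq by metis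
    then show "odd (card (symdiff M1 M2 \<inter> Scol))" using sq_col[OF en, of i j "(i + 1) mod m"] by simp
  qed
qed



definition SR :: "(nat \<times> nat) set set" where
  "SR = {d. \<exists>a. even a \<and> (\<forall>x\<in>d. fst x = a)}"
definition SC :: "(nat \<times> nat) set set" where
  "SC = {d. \<exists>a. even a \<and> (\<forall>x\<in>d. snd x = a)}"

abbreviation Hb :: "nat \<Rightarrow> nat \<Rightarrow> nat \<Rightarrow> nat \<Rightarrow> (nat \<times> nat) set set" where
  "Hb i i' j j' \<equiv> {{(i, j), (i, j')}, {(i', j), (i', j')}}"
abbreviation Vb :: "nat \<Rightarrow> nat \<Rightarrow> nat \<Rightarrow> nat \<Rightarrow> (nat \<times> nat) set set" where
  "Vb i i' j j' \<equiv> {{(i, j), (i', j)}, {(i, j'), (i', j')}}"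

lemma tiling_excl:
  assumes "tiling Sq Adj T" "p \<in> T" "s \<in> Sq" "s \<in> p" "s \<in> q" "q \<noteq> p"
  shows "q \<notin> T"
  using assms unfolding tiling_def by blast

lemma tiling_finite:
  assumes "finite Sq" "tiling Sq Adj T"
  shows "finite T"
proof -
  have "T \<subseteq> Pow Sq" using assms(2) unfolding tiling_def dominoes_def by auto
  then show ?thesis using assms(1) by (meson finite_Pow_iff finite_subset)
qed

lemma block_excl:
  assumes ij: "i \<noteq> i'" "j \<noteq> j'"
    and sq: "(i, j) \<in> Sq" "(i, j') \<in> Sq" "(i', j) \<in> Sq" "(i', j') \<in> Sq"
    and t: "tiling Sq Adj T"
    and pq: "(P, Q) = (Hb i i' j j', Vb i i' j j') \<or> (P, Q) = (Vb i i' j j', Hb i i' j j')"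
    and sub: "P \<subseteq> T"
  shows "Q \<inter> T = {}"
  using pq
proof
  assume a: "(P, Q) = (Hb i i' j j', Vb i i' j j')"
  have p1: "{(i, j), (i, j')} \<in> T" using a sub by auto
  have "{(i, j), (i', j)} \<notin> T"
    by (rule tiling_excl[OF t p1 sq(1)]) (use ij in auto)
  moreover have "{(i, j'), (i', j')} \<notin> T"
    by (rule tiling_excl[OF t p1 sq(2)]) (use ij in auto)
  ultimately show ?thesis using a by auto
next
  assume a: "(P, Q) = (Vb i i' j j', Hb i i' j j')"
  have p1: "{(i, j), (i', j)} \<in> T" using a sub by auto
  have "{(i, j), (i, j')} \<notin> T"
    by (rule tiling_excl[OF t p1 sq(1)]) (use ij in auto)
  moreover have "{(i', j), (i', j')} \<notin> T"
    by (rule tiling_excl[OF t p1 sq(3)]) (use ij in auto)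
  ultimately show ?thesis using a by auto
qed

lemma block_SR:
  assumes "i \<noteq> i'" "even i \<noteq> even i'"
  shows "card (Hb i i' j j' \<inter> SR) + card (Vb i i' j j' \<inter> SR) = 1"
proof -
  have v: "Vb i i' j j' \<inter> SR = {}" using assms(1) by (auto simp: SR_def)
  have "Hb i i' j j' \<inter> SR = (if even i then {{(i, j), (i, j')}} else {{(i', j), (i', j')}})"
    using assms by (auto simp: SR_def)
  then show ?thesis using v by simp
qed

lemma block_SC:
  assumes "j \<noteq> j'" "even j \<noteq> even j'"
  shows "card (Hb i i' j j' \<inter> SC) + card (Vb i i' j j' \<inter> SC) = 1"
proof -
  have v: "Hb i i' j j' \<inter> SC = {}" using assms(1) by (auto simp: SC_def)
  have "Vb i i' j j' \<inter> SC = (if even j then {{(i, j), (i', j)}} else {{(i, j'), (i', j')}})"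
    using assms by (auto simp: SC_def)
  then show ?thesis using v by simp
qed

lemma bip_flip:
  assumes fin: "finite Sq"
    and blk: "\<And>P Q T. (P, Q) \<in> Blocks \<Longrightarrow> tiling Sq Adj T \<Longrightarrow> P \<subseteq> T \<Longrightarrow>
               finite Q \<and> Q \<inter> T = {} \<and> odd (card (P \<inter> S) + card (Q \<inter> S))"
  shows "bipartite (flip_adj Sq Adj Blocks)"
proof (rule bip_intro[where c = "\<lambda>T. even (card (T \<inter> S))"])
  fix T1 T2 assume "flip_adj Sq Adj Blocks T1 T2"
  then obtain P Q where t1: "tiling Sq Adj T1" and b: "(P, Q) \<in> Blocks" and s: "P \<subseteq> T1"
    and e: "T2 = (T1 - P) \<union> Q"
    unfolding flip_adj_def by blast
  have h: "finite Q \<and> Q \<inter> T1 = {} \<and> odd (card (P \<inter> S) + card (Q \<inter> S))" using blk[OF b t1 s] .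
  show "even (card (T1 \<inter> S)) \<noteq> even (card (T2 \<inter> S))"
    using flip_color[OF tiling_finite[OF fin t1] _ s _ e] h by blast
qed



lemma mod_suc_neq:
  fixes j n :: nat
  assumes "j < n" "n \<ge> 2"
  shows "(j + 1) mod n \<noteq> j"
proof (cases "j + 1 < n")
  case True
  then have "(j + 1) mod n = j + 1" by (rule mod_less)
  then show ?thesis by simp
next
  case False
  then have "j + 1 = n" using assms by simp
  then show ?thesis using assms by simp
qed

lemma cylR_bip:
  assumes n2: "n \<ge> 2"
  shows "bipartite (flip_adj (cylR_squares m n) (cylR_adj m n) (cylR_blocks m n))"
proof (rule bip_flip[where S = SR])
  show "finite (cylR_squares m n)"
    by (rule finite_subset[of _ "{..<m} \<times> {..<n}"]) (auto simp: cylR_squares_def)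
next
  fix P Q T assume b: "(P, Q) \<in> cylR_blocks m n" and t: "tiling (cylR_squares m n) (cylR_adj m n) T"
    and s: "P \<subseteq> T"
  then obtain i j where ij: "i + 1 < m" "j < n"
    and pq: "(P, Q) = (Hb i (i + 1) j ((j + 1) mod n), Vb i (i + 1) j ((j + 1) mod n))
           \<or> (P, Q) = (Vb i (i + 1) j ((j + 1) mod n), Hb i (i + 1) j ((j + 1) mod n))"
    unfolding cylR_blocks_def Let_def by blast
  have jj: "j \<noteq> (j + 1) mod n" using mod_suc_neq[OF ij(2) n2] by simp
  have sq: "(i, j) \<in> cylR_squares m n" "(i, (j + 1) mod n) \<in> cylR_squares m n"
    "(i + 1, j) \<in> cylR_squares m n" "(i + 1, (j + 1) mod n) \<in> cylR_squares m n"
    using ij n2 by (auto simp: cylR_squares_def)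
  have "Q \<inter> T = {}" by (rule block_excl[OF _ jj sq t pq s]) simp
  moreover have "card (P \<inter> SR) + card (Q \<inter> SR) = 1"
    using pq block_SR[of i "i + 1" j "(j + 1) mod n"] by auto
  ultimately show "finite Q \<and> Q \<inter> T = {} \<and> odd (card (P \<inter> SR) + card (Q \<inter> SR))"
    using pq by auto
qed

lemma torR_bip:
  assumes n2: "n \<ge> 2" and m2: "m \<ge> 2" and ev: "even (m * n)"
  shows "bipartite (flip_adj (torR_squares m n) (torR_adj m n) (torR_blocks m n))"
proof (rule bip_flip[where S = "if even m then SR else SC"])
  show "finite (torR_squares m n)"
    by (rule finite_subset[of _ "{..<m} \<times> {..<n}"]) (auto simp: torR_squares_def)
next
  fix P Q T assume b: "(P, Q) \<in> torR_blocks m n" and t: "tiling (torR_squares m n) (torR_adj m n) T"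
    and s: "P \<subseteq> T"
  then obtain i j where ij: "i < m" "j < n"
    and pq: "(P, Q) = (Hb i ((i + 1) mod m) j ((j + 1) mod n), Vb i ((i + 1) mod m) j ((j + 1) mod n))
           \<or> (P, Q) = (Vb i ((i + 1) mod m) j ((j + 1) mod n), Hb i ((i + 1) mod m) j ((j + 1) mod n))"
    unfolding torR_blocks_def Let_def by blast
  have jj: "j \<noteq> (j + 1) mod n" using mod_suc_neq[OF ij(2) n2] by simp
  have ii: "i \<noteq> (i + 1) mod m" using mod_suc_neq[OF ij(1) m2] by simp
  have sq: "(i, j) \<in> torR_squares m n" "(i, (j + 1) mod n) \<in> torR_squares m n"
    "((i + 1) mod m, j) \<in> torR_squares m n" "((i + 1) mod m, (j + 1) mod n) \<in> torR_squares m n"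
    using ij n2 m2 by (auto simp: torR_squares_def)
  have "Q \<inter> T = {}" by (rule block_excl[OF ii jj sq t pq s])
  moreover have "card (P \<inter> (if even m then SR else SC)) + card (Q \<inter> (if even m then SR else SC)) = 1"
  proof (cases "even m")
    case True
    have "even i \<noteq> even ((i + 1) mod m)" using even_mod_even[OF True, of "i + 1"] by simp
    then show ?thesis using True pq block_SR[OF ii, of j "(j + 1) mod n"] by auto
  next
    case False
    then have en: "even n" using ev by simp
    have "even j \<noteq> even ((j + 1) mod n)" using even_mod_even[OF en, of "j + 1"] by simp
    then show ?thesis using False pq block_SC[OF jj, of i "(i + 1) mod m"] by auto
  qed
  ultimately show "finite Q \<and> Q \<inter> T = {} \<and>
      odd (card (P \<inter> (if even m then SR else SC)) + card (Q \<inter> (if even m then SR else SC)))"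
    using pq by auto
qed


theorem corollary2p7:
  fixes m n :: nat
  assumes "n \<ge> 2" and "m \<ge> 2" and "even (m * n)"
  shows "bipartite (total_res_adj (cyl_verts (m - 1) n) (cyl_edges (m - 1) n) (cyl_ends n)
                      (cyl_faces (m - 1) n))
       \<and> bipartite (total_res_adj (tor_verts m n) (tor_edges m n) (tor_ends m n) (tor_faces m n))
       \<and> bipartite (flip_adj (cylR_squares m n) (cylR_adj m n) (cylR_blocks m n))
       \<and> bipartite (flip_adj (torR_squares m n) (torR_adj m n) (torR_blocks m n))"
  using cyl_bip[OF assms(1)] tor_bip[OF assms] cylR_bip[OF assms(1)] torR_bip[OF assms] by blast

end
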